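(* Let $(G,\mathbf p)$ be a framework (with $\mathbf p$ pinned with $\ell$-dimensional affine span) and $E$ an energy that is stiff-bar at $\mathbf p$, and define $f(\delta\mathbf p)=E(\mathbf p+\delta\mathbf p)-E(\mathbf p)$ on $\ell$-pinned configuration space. Consider the family of trajectories $$\delta\mathbf p(t;\mathbf p_0',\mathbf p_0'')=\mathbf p_0't+\mathbf p_0''t^2,\qquad \mathbf p_0'\in K,\ \mathbf p_0''\in\overline K,\ |\mathbf p_0'+\mathbf p_0''|=1.$$ If $(G,\mathbf p)$ has a $(1,2)$ $E$-flex, then this family is indicative at order $4$ for $f$ at the origin.
   Context: Fix a dimension $d$. A configuration is $\mathbf p=(\mathbf p_1,\dots,\mathbf p_n)$, $\mathbf p_i\in\mathbb R^d$; a framework $(G,\mathbf p)$ consists of a graph $G$ on $\{1,\dots,n\}$ and a configuration. A configuration $\mathbf q$ is in $\ell$-pinned position if $\mathbf q_1=0$ and, for $2\le i\le\ell+1$, $\mathbf q_i\in\mathrm{span}(e_1,\dots,e_{i-1})$; these form the $\ell$-pinned configuration space. $\mathbf p$ is pinned if it has $\ell$-dimensional affine span, $\mathbf p_1,\dots,\mathbf p_{\ell+1}$ are affinely independent, and $\mathbf p$ is in $\ell$-pinned position. $K$ is the linear space of $\ell$-pinned $\mathbf p'$ with $(\mathbf p_v-\mathbf p_w)\cdot(\mathbf p'_v-\mathbf p'_w)=0$ for all edges $vw$, and $\overline K$ is a fixed complementary subspace of $K$ in $\ell$-pinned configuration space. A stiff-bar energy at $\mathbf p$ is $E(\mathbf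 q)=\sum_{ij\in E(G)}E_{ij}(|\mathbf q_i-\mathbf q_j|)$ on $\ell$-pinned configurations, each $E_{ij}$ analytic at $d_{ij}=|\mathbf p_i-\mathbf p_j|\ne0$ with a strict local minimum there and $E_{ij}''(d_{ij})>0$. A $C^k$ function $\varphi(t)$ is $k$-vanishing if $\varphi^{(i)}(0)=0$ for $1\le i\le k$, $k$-active if $(k-1)$-vanishing but not $k$-vanishing. A $(j,k)$ $E$-flex is an analytic non-constant $\ell$-pinned trajectory $\mathbf p(t)$, $\mathbf p(0)=\mathbf p$, that is $j$-active and with $E(\mathbf p(t))$ $k$-vanishing. A family of test trajectories $\{\mathbf z(t;\mathbf z_0)\}_{\mathbf z_0\in S}$ consists of maps defined for $t$ in a common interval $[0,\varepsilon]$, each $t\mapsto\mathbf z(t;\mathbf z_0)$ analytic, non-constant, with $\mathbf z(0;\mathbf z_0)=0$. For a $C^{2k+1}$ function $f$ with a critical point at $0$ and $f(0)=0$, it is indicative at order $2k$ for $f$ if: (I1) $S$ is compact; (I2) $(t,\mathbf z_0)\mapsto\mathbf z(t;\mathbf z_0)$ is $C^{2k+1}$; (I3) for every $0<\delta\le\varepsilon$ there is a neighborhood $U$ of the origin such that every point of $U$ equals $\mathbf z(t;\mathbf z_0)$ for some $\mathbf z_0\in S$, $t\in[0,\delta]$; (I4) for every $\mathbf z_0\in S$ all Taylor coefficients in $t$ of $f(\mathbf z(t;\mathbf z_0))$ of order less than $2k$ vanish. *)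

theory Defs
  imports "HOL-Analysis.Analysis"
begin

text \<open>Vertices are the
elements of the finite linearly ordered type 'n (vertex i is the element of rank i-1);
coordinates are the elements of the finite linearly ordered type 'd (e_c is the
coordinate of rank c-1).\<close>

definition rank :: "'a::{finite,linorder} \<Rightarrow> nat" where
  "rank v = card {w. w < v}"

text \<open>Edges: each edge {i,j} of G is represented exactly once as the pair (i,j) with i<j.\<close>
definition graph_edges :: "('n::{finite,linorder} \<times> 'n::{finite,linorder}) set \<Rightarrow> bool" where
  "graph_edges Eg \<longleftrightarrow> (\<forall>(i,j)\<in>Eg. i < j)"

text \<open>l-pinned position: q_1 = 0 and q_i in span(e_1..e_{i-1}) for 2 <= i <= l+1.\<close>
definition pinned_pos :: "nat \<Rightarrow> real^'d::{finite,linorder}^'n::{finite,linorder} \<Rightarrow> bool" where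
  "pinned_pos l q \<longleftrightarrow>
     (\<forall>v c. rank v \<le> l \<longrightarrow> rank c \<ge> rank v \<longrightarrow> q $ v $ c = 0)"

definition pinned_space :: "nat \<Rightarrow> (real^'d::{finite,linorder}^'n::{finite,linorder}) set" where
  "pinned_space l = {q. pinned_pos l q}"

definition pinned :: "nat \<Rightarrow> real^'d::{finite,linorder}^'n::{finite,linorder} \<Rightarrow> bool" where
  "pinned l p \<longleftrightarrow>
     aff_dim (range (\<lambda>v. p $ v)) = int l \<and>
     l < CARD('n::{finite,linorder}) \<and>
     inj_on (\<lambda>v. p $ v) {v. rank v \<le> l} \<and>
     \<not> affine_dependent ((\<lambda>v. p $ v) ` {v. rank v \<le> l}) \<and>
     pinned_pos l p"

definition Kspace :: "nat \<Rightarrow> ('n::{finite,linorder} \<times> 'n::{finite,linorder}) set \<Rightarrow> real^'d::{finite,linorder}^'n::{finite,linorder}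
    \<Rightarrow> (real^'d::{finite,linorder}^'n::{finite,linorder}) set" where
  "Kspace l Eg p = {q \<in> pinned_space l. \<forall>(v,w)\<in>Eg. (p $ v - p $ w) \<bullet> (q $ v - q $ w) = 0}"

definition complement_in :: "'a::real_vector set \<Rightarrow> 'a set \<Rightarrow> 'a set \<Rightarrow> bool" where
  "complement_in V K Kbar \<longleftrightarrow> subspace Kbar \<and> Kbar \<subseteq> V \<and> K \<inter> Kbar = {0} \<and>
     V \<subseteq> {a + b | a b. a \<in> K \<and> b \<in> Kbar}"

definition real_analytic_at :: "(real \<Rightarrow> 'a::real_normed_vector) \<Rightarrow> real \<Rightarrow> bool" where
  "real_analytic_at f x0 \<longleftrightarrow>
     (\<exists>r>0. \<exists>a::nat \<Rightarrow> 'a. \<forall>x. \<bar>x - x0\<bar> < r \<longrightarrow> (\<lambda>m. (x - x0) ^ m *\<^sub>R a m) sums f x)"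

definition energy :: "('n::{finite,linorder} \<times> 'n::{finite,linorder}) set \<Rightarrow> ('n::{finite,linorder} \<times> 'n::{finite,linorder} \<Rightarrow> real \<Rightarrow> real)
    \<Rightarrow> real^'d::{finite,linorder}^'n::{finite,linorder} \<Rightarrow> real" where
  "energy Eg Ee q = (\<Sum>(i,j)\<in>Eg. Ee (i,j) (norm (q $ i - q $ j)))"

definition stiff_bar :: "('n::{finite,linorder} \<times> 'n::{finite,linorder}) set \<Rightarrow> ('n::{finite,linorder} \<times> 'n::{finite,linorder} \<Rightarrow> real \<Rightarrow> real)
    \<Rightarrow> real^'d::{finite,linorder}^'n::{finite,linorder} \<Rightarrow> bool" where
  "stiff_bar Eg Ee p \<longleftrightarrow> (\<forall>(i,j)\<in>Eg.
     norm (p $ i - p $ j) \<noteq> 0 \<and>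
     real_analytic_at (Ee (i,j)) (norm (p $ i - p $ j)) \<and>
     (\<exists>r>0. \<forall>x. 0 < \<bar>x - norm (p $ i - p $ j)\<bar> \<and> \<bar>x - norm (p $ i - p $ j)\<bar> < r
          \<longrightarrow> Ee (i,j) (norm (p $ i - p $ j)) < Ee (i,j) x) \<and>
     deriv (deriv (Ee (i,j))) (norm (p $ i - p $ j)) > 0)"

primrec hvd :: "nat \<Rightarrow> (real \<Rightarrow> 'a::real_normed_vector) \<Rightarrow> real set \<Rightarrow> real \<Rightarrow> 'a" where
  "hvd 0 f S = f"
| "hvd (Suc m) f S = (\<lambda>t. vector_derivative (hvd m f S) (at t within S))"

definition vanishing :: "nat \<Rightarrow> (real \<Rightarrow> 'a::real_normed_vector) \<Rightarrow> bool" where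
  "vanishing k \<phi> \<longleftrightarrow> (\<forall>i\<in>{1..k}. hvd i \<phi> UNIV 0 = 0)"

definition active :: "nat \<Rightarrow> (real \<Rightarrow> 'a::real_normed_vector) \<Rightarrow> bool" where
  "active k \<phi> \<longleftrightarrow> vanishing (k - 1) \<phi> \<and> \<not> vanishing k \<phi>"

definition E_flex :: "nat \<Rightarrow> nat \<Rightarrow> nat \<Rightarrow> ('n::{finite,linorder} \<times> 'n::{finite,linorder}) set
    \<Rightarrow> ('n::{finite,linorder} \<times> 'n::{finite,linorder} \<Rightarrow> real \<Rightarrow> real) \<Rightarrow> real^'d::{finite,linorder}^'n::{finite,linorder} \<Rightarrow> bool" where
  "E_flex j k l Eg Ee p \<longleftrightarrow> (\<exists>(P :: real \<Rightarrow> real^'d::{finite,linorder}^'n::{finite,linorder}) r. r > 0 \<and>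
     (\<forall>t. \<bar>t\<bar> < r \<longrightarrow> real_analytic_at P t \<and> pinned_pos l (P t)) \<and>
     P 0 = p \<and> (\<exists>t. \<bar>t\<bar> < r \<and> P t \<noteq> p) \<and>
     active j P \<and> vanishing k (\<lambda>t. energy Eg Ee (P t)))"

primrec Ck :: "nat \<Rightarrow> 'a::euclidean_space set \<Rightarrow> ('a \<Rightarrow> 'b::real_normed_vector) \<Rightarrow> bool" where
  "Ck 0 U f = continuous_on U f"
| "Ck (Suc m) U f = ((\<forall>x\<in>U. f differentiable (at x)) \<and>
     (\<forall>v. Ck m U (\<lambda>x. frechet_derivative f (at x) v)))"

definition indicative :: "('a::euclidean_space \<Rightarrow> real) \<Rightarrow> 'a set \<Rightarrow> nat \<Rightarrow> real
    \<Rightarrow> 'b::euclidean_space set \<Rightarrow> (real \<Rightarrow> 'b \<Rightarrow> 'a) \<Rightarrow> bool" where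
  "indicative f V k \<epsilon> S Z \<longleftrightarrow> \<epsilon> > 0 \<and>
     (\<forall>z0\<in>S. (\<forall>t\<in>{0..\<epsilon>}. real_analytic_at (\<lambda>s. Z s z0) t \<and> Z t z0 \<in> V) \<and>
              (\<exists>t\<in>{0..\<epsilon>}. Z t z0 \<noteq> Z 0 z0) \<and> Z 0 z0 = 0) \<and>
     compact S \<and>
     (\<exists>U. open U \<and> {0..\<epsilon>} \<times> S \<subseteq> U \<and> Ck (2*k+1) U (\<lambda>(t,z0). Z t z0)) \<and>
     (\<forall>\<delta>. 0 < \<delta> \<and> \<delta> \<le> \<epsilon> \<longrightarrow>
        (\<exists>r>0. \<forall>x\<in>V. norm x < r \<longrightarrow> (\<exists>z0\<in>S. \<exists>t\<in>{0..\<delta>}. Z t z0 = x))) \<and>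
     (\<forall>z0\<in>S. \<forall>m<2*k. hvd m (\<lambda>t. f (Z t z0)) {0..\<epsilon>} 0 = 0)"

end

theory Submission
  imports Defs
begin



lemma chain3:
  fixes g ga gb gc h ha hb hc :: "real \<Rightarrow> real"
  assumes g: "\<And>y. y \<in> J \<Longrightarrow> (g has_real_derivative ga y) (at y) \<and> (ga has_real_derivative gb y) (at y)
                 \<and> (gb has_real_derivative gc y) (at y)"
    and h: "\<And>t. t \<in> I \<Longrightarrow> (h has_real_derivative ha t) (at t) \<and> (ha has_real_derivative hb t) (at t)
                 \<and> (hb has_real_derivative hc t) (at t)"
    and hJ: "\<And>t. t \<in> I \<Longrightarrow> h t \<in> J"
    and t: "t \<in> I"
  shows "((\<lambda>t. g (h t)) has_real_derivative (ga (h t) * ha t)) (at t)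
       \<and> ((\<lambda>t. ga (h t) * ha t) has_real_derivative (gb (h t) * (ha t)\<^sup>2 + ga (h t) * hb t)) (at t)
       \<and> ((\<lambda>t. gb (h t) * (ha t)\<^sup>2 + ga (h t) * hb t) has_real_derivative
             (gc (h t) * (ha t)^3 + 3 * gb (h t) * ha t * hb t + ga (h t) * hc t)) (at t)"
proof -
  from g[OF hJ[OF t]] have G1: "(g has_real_derivative ga (h t)) (at (h t))"
    and G2: "(ga has_real_derivative gb (h t)) (at (h t))"
    and G3: "(gb has_real_derivative gc (h t)) (at (h t))" by auto
  from h[OF t] have H1: "(h has_real_derivative ha t) (at t)"
    and H2: "(ha has_real_derivative hb t) (at t)"
    and H3: "(hb has_real_derivative hc t) (at t)" by auto
  have a: "((\<lambda>t. g (h t)) has_real_derivative (ga (h t) * ha t)) (at t)"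
    using DERIV_chain2[OF G1 H1] .
  have c1: "((\<lambda>t. ga (h t)) has_real_derivative (gb (h t) * ha t)) (at t)"
    using DERIV_chain2[OF G2 H1] .
  have c2: "((\<lambda>t. gb (h t)) has_real_derivative (gc (h t) * ha t)) (at t)"
    using DERIV_chain2[OF G3 H1] .
  have b: "((\<lambda>t. ga (h t) * ha t) has_real_derivative (gb (h t) * (ha t)\<^sup>2 + ga (h t) * hb t)) (at t)"
    using DERIV_mult[OF c1 H2] by (simp add: power2_eq_square algebra_simps)
  have sq: "((\<lambda>t. (ha t)\<^sup>2) has_real_derivative (2 * ha t * hb t)) (at t)"
    using DERIV_mult[OF H2 H2] by (simp add: power2_eq_square algebra_simps)
  have c: "((\<lambda>t. gb (h t) * (ha t)\<^sup>2 + ga (h t) * hb t) has_real_derivative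
             (gc (h t) * (ha t)^3 + 3 * gb (h t) * ha t * hb t + ga (h t) * hc t)) (at t)"
    using DERIV_add[OF DERIV_mult[OF c2 sq] DERIV_mult[OF c1 H3]]
    by (simp add: power2_eq_square power3_eq_cube algebra_simps)
  show ?thesis using a b c by blast
qed

lemma powr_derivs:
  fixes y :: real assumes "0 < y"
  shows "((\<lambda>y. y powr (1/2)) has_real_derivative ((1/2) * y powr (-1/2))) (at y)
     \<and> ((\<lambda>y. (1/2) * y powr (-1/2)) has_real_derivative ((-1/4) * y powr (-3/2))) (at y)
     \<and> ((\<lambda>y. (-1/4) * y powr (-3/2)) has_real_derivative ((3/8) * y powr (-5/2))) (at y)"
proof -
  have 1: "((\<lambda>y. y powr (1/2)) has_real_derivative ((1/2) * y powr (1/2 - 1))) (at y)"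
    using has_real_derivative_powr[OF assms] .
  have 2: "((\<lambda>y. (1/2) * y powr (-1/2)) has_real_derivative ((1/2) * ((-1/2) * y powr (-1/2 - 1)))) (at y)"
    using DERIV_cmult[OF has_real_derivative_powr[OF assms]] .
  have 3: "((\<lambda>y. (-1/4) * y powr (-3/2)) has_real_derivative ((-1/4) * ((-3/2) * y powr (-3/2 - 1)))) (at y)"
    using DERIV_cmult[OF has_real_derivative_powr[OF assms]] .
  show ?thesis using 1 2 3 by (simp add: field_simps)
qed

lemma hvd_link:
  fixes \<phi> :: "real \<Rightarrow> real" and D :: "nat \<Rightarrow> real \<Rightarrow> real"
  assumes "0 < \<epsilon>" and D0: "D 0 = \<phi>"
    and D: "\<And>m t. m < k \<Longrightarrow> t \<in> {0..\<epsilon>} \<Longrightarrow> (D m has_real_derivative D (Suc m) t) (at t)"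
  shows "m \<le> k \<Longrightarrow> t \<in> {0..\<epsilon>} \<Longrightarrow> hvd m \<phi> {0..\<epsilon>} t = D m t"
proof (induction m arbitrary: t)
  case 0 then show ?case using D0 by simp
next
  case (Suc m)
  have eq: "\<And>s. s \<in> {0..\<epsilon>} \<Longrightarrow> D m s = hvd m \<phi> {0..\<epsilon>} s" using Suc by simp
  have "(D m has_real_derivative D (Suc m) t) (at t within {0..\<epsilon>})"
    using D[of m t] Suc.prems by (auto intro: has_field_derivative_at_within)
  then have "(D m has_vector_derivative D (Suc m) t) (at t within {0..\<epsilon>})"
    by (simp add: has_real_derivative_iff_has_vector_derivative)
  then have "(hvd m \<phi> {0..\<epsilon>} has_vector_derivative D (Suc m) t) (at t within {0..\<epsilon>})"
    unfolding has_vector_derivative_def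
    by (rule has_derivative_transform_within[where d=1]) (use Suc.prems eq in auto)
  then show ?case using vector_derivative_within_closed_interval[of 0 \<epsilon> t] Suc.prems assms(1) by simp
qed


lemma edge_flat:
  fixes w0 u v :: "'v::real_inner" and E Ea Eb Ec :: "real \<Rightarrow> real"
  assumes wu: "w0 \<bullet> u = 0"
    and Ed: "\<And>y. \<bar>y - norm w0\<bar> < R \<Longrightarrow> (E has_real_derivative Ea y) (at y) \<and> (Ea has_real_derivative Eb y) (at y)
                 \<and> (Eb has_real_derivative Ec y) (at y)"
    and Ea0: "Ea (norm w0) = 0"
    and R: "R \<le> norm w0"
    and I: "\<And>t. t \<in> I \<Longrightarrow> norm (t *\<^sub>R u + t\<^sup>2 *\<^sub>R v) < R"
    and I0: "0 \<in> I"
  shows "\<exists>D :: nat \<Rightarrow> real \<Rightarrow> real. D 0 = (\<lambda>t. E (norm (w0 + t *\<^sub>R u + t\<^sup>2 *\<^sub>R v))) \<and>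
           (\<forall>m<3. \<forall>t\<in>I. (D m has_real_derivative D (Suc m) t) (at t)) \<and>
           D 1 0 = 0 \<and> D 2 0 = 0 \<and> D 3 0 = 0"
proof -
  define c0 c2 c3 c4 where "c0 = w0 \<bullet> w0" and "c2 = u \<bullet> u + 2 * (w0 \<bullet> v)"
    and "c3 = 2 * (u \<bullet> v)" and "c4 = v \<bullet> v"
  define \<sigma> where "\<sigma> t = c0 + c2 * t\<^sup>2 + c3 * t ^ 3 + c4 * t ^ 4" for t :: real
  define \<sigma>1 where "\<sigma>1 t = 2 * c2 * t + 3 * c3 * t\<^sup>2 + 4 * c4 * t ^ 3" for t :: real
  define \<sigma>2 where "\<sigma>2 t = 2 * c2 + 6 * c3 * t + 12 * c4 * t\<^sup>2" for t :: real
  define \<sigma>3 where "\<sigma>3 t = 6 * c3 + 24 * c4 * t" for t :: real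
  have sig: "\<sigma> t = (w0 + t *\<^sub>R u + t\<^sup>2 *\<^sub>R v) \<bullet> (w0 + t *\<^sub>R u + t\<^sup>2 *\<^sub>R v)" for t
    unfolding \<sigma>_def c0_def c2_def c3_def c4_def
    using wu by (simp add: inner_add_left inner_add_right inner_commute algebra_simps power2_eq_square power3_eq_cube power4_eq_xxxx)
  have rho: "norm (w0 + t *\<^sub>R u + t\<^sup>2 *\<^sub>R v) = \<sigma> t powr (1/2)" for t
    unfolding sig norm_eq_sqrt_inner by (simp add: powr_half_sqrt)
  have sd: "(\<sigma> has_real_derivative \<sigma>1 t) (at t) \<and> (\<sigma>1 has_real_derivative \<sigma>2 t) (at t)
       \<and> (\<sigma>2 has_real_derivative \<sigma>3 t) (at t)" if "t \<in> I" for t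
    unfolding \<sigma>_def \<sigma>1_def \<sigma>2_def \<sigma>3_def
    by (intro conjI) (rule derivative_eq_intros refl | simp add: algebra_simps power2_eq_square power3_eq_cube)+
  have normI: "\<bar>norm (w0 + t *\<^sub>R u + t\<^sup>2 *\<^sub>R v) - norm w0\<bar> < R" if "t \<in> I" for t
  proof -
    have "\<bar>norm (w0 + t *\<^sub>R u + t\<^sup>2 *\<^sub>R v) - norm w0\<bar> \<le> norm ((w0 + t *\<^sub>R u + t\<^sup>2 *\<^sub>R v) - w0)"
      by (rule norm_triangle_ineq3)
    also have "\<dots> = norm (t *\<^sub>R u + t\<^sup>2 *\<^sub>R v)" by (simp add: algebra_simps)
    finally show ?thesis using I[OF that] by linarith
  qed
  have spos: "\<sigma> t \<in> {0<..}" if "t \<in> I" for t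
  proof -
    have "norm (w0 + t *\<^sub>R u + t\<^sup>2 *\<^sub>R v) > 0" using normI[OF that] R by linarith
    then show ?thesis unfolding sig by simp
  qed
  define g1 where "g1 y = (1/2) * y powr (-1/2)" for y :: real
  define g2 where "g2 y = (-1/4) * y powr (-3/2)" for y :: real
  define g3 where "g3 y = (3/8) * y powr (-5/2)" for y :: real
  define \<rho> where "\<rho> t = \<sigma> t powr (1/2)" for t
  define \<rho>1 where "\<rho>1 t = g1 (\<sigma> t) * \<sigma>1 t" for t
  define \<rho>2 where "\<rho>2 t = g2 (\<sigma> t) * (\<sigma>1 t)\<^sup>2 + g1 (\<sigma> t) * \<sigma>2 t" for t
  define \<rho>3 where "\<rho>3 t = g3 (\<sigma> t) * (\<sigma>1 t)^3 + 3 * g2 (\<sigma> t) * \<sigma>1 t * \<sigma>2 t + g1 (\<sigma> t) * \<sigma>3 t" for t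
  have rd: "(\<rho> has_real_derivative \<rho>1 t) (at t) \<and> (\<rho>1 has_real_derivative \<rho>2 t) (at t)
       \<and> (\<rho>2 has_real_derivative \<rho>3 t) (at t)" if "t \<in> I" for t
    using chain3[where g="\<lambda>y. y powr (1/2)" and ga=g1 and gb=g2 and gc=g3 and J="{0<..}" and h=\<sigma> and ha=\<sigma>1
       and hb=\<sigma>2 and hc=\<sigma>3 and I=I, OF _ sd spos that] powr_derivs
    unfolding \<rho>_def \<rho>1_def \<rho>2_def \<rho>3_def g1_def g2_def g3_def
    by (simp add: fun_eq_iff) 
  have rJ: "\<rho> t \<in> {y. \<bar>y - norm w0\<bar> < R}" if "t \<in> I" for t
    using normI[OF that] unfolding \<rho>_def rho[symmetric] by simp
  define D where "D = (\<lambda>m::nat. if m = 0 then (\<lambda>t. E (\<rho> t)) else if m = 1 then (\<lambda>t. Ea (\<rho> t) * \<rho>1 t)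
     else if m = 2 then (\<lambda>t. Eb (\<rho> t) * (\<rho>1 t)\<^sup>2 + Ea (\<rho> t) * \<rho>2 t)
     else (\<lambda>t. Ec (\<rho> t) * (\<rho>1 t)^3 + 3 * Eb (\<rho> t) * \<rho>1 t * \<rho>2 t + Ea (\<rho> t) * \<rho>3 t))"
  have ch: "((\<lambda>t. E (\<rho> t)) has_real_derivative (Ea (\<rho> t) * \<rho>1 t)) (at t)
       \<and> ((\<lambda>t. Ea (\<rho> t) * \<rho>1 t) has_real_derivative (Eb (\<rho> t) * (\<rho>1 t)\<^sup>2 + Ea (\<rho> t) * \<rho>2 t)) (at t)
       \<and> ((\<lambda>t. Eb (\<rho> t) * (\<rho>1 t)\<^sup>2 + Ea (\<rho> t) * \<rho>2 t) has_real_derivative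
             (Ec (\<rho> t) * (\<rho>1 t)^3 + 3 * Eb (\<rho> t) * \<rho>1 t * \<rho>2 t + Ea (\<rho> t) * \<rho>3 t)) (at t)"
    if "t \<in> I" for t
    by (rule chain3[where J="{y. \<bar>y - norm w0\<bar> < R}" and I=I, OF _ rd rJ that]) (use Ed in auto)
  have s10: "\<sigma>1 0 = 0" unfolding \<sigma>1_def by simp
  have r0: "\<rho> 0 = norm w0" unfolding \<rho>_def rho[of 0, symmetric] by simp
  have r10: "\<rho>1 0 = 0" unfolding \<rho>1_def s10 by simp
  show ?thesis
  proof (intro exI[of _ D] conjI allI impI ballI)
    show "D 0 = (\<lambda>t. E (norm (w0 + t *\<^sub>R u + t\<^sup>2 *\<^sub>R v)))" unfolding D_def \<rho>_def rho by simp
    fix m :: nat and t assume "m < 3" "t \<in> I"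
    then have "m = 0 \<or> m = 1 \<or> m = 2" by auto
    then show "(D m has_real_derivative D (Suc m) t) (at t)"
      using ch[OF \<open>t \<in> I\<close>] unfolding D_def by auto
  qed (simp_all add: D_def r0 r10 Ea0)
qed



lemma ps_deriv:
  fixes c :: "nat \<Rightarrow> real"
  assumes sm: "\<And>y. \<bar>y\<bar> < r \<Longrightarrow> summable (\<lambda>n. c n * y ^ n)" and y: "\<bar>y\<bar> < r"
  shows "((\<lambda>y. \<Sum>n. c n * y ^ n) has_real_derivative (\<Sum>n. diffs c n * y ^ n)) (at y)"
    and "\<And>y. \<bar>y\<bar> < r \<Longrightarrow> summable (\<lambda>n. diffs c n * y ^ n)"
proof -
  define K where "K = (\<bar>y\<bar> + r) / 2"
  have "\<bar>K\<bar> < r" "norm y < norm K" using y by (auto simp: K_def)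
  then show "((\<lambda>y. \<Sum>n. c n * y ^ n) has_real_derivative (\<Sum>n. diffs c n * y ^ n)) (at y)"
    using termdiffs_strong[of c K y] sm by auto
next
  fix y :: real assume "\<bar>y\<bar> < r"
  then show "summable (\<lambda>n. diffs c n * y ^ n)"
    using termdiff_converges[of y r c] sm by auto
qed

lemma analytic_derivs:
  fixes E :: "real \<Rightarrow> real"
  assumes "real_analytic_at E d"
  shows "\<exists>r>0. \<exists>E1 E2 E3. \<forall>y. \<bar>y - d\<bar> < r \<longrightarrow>
     (E has_real_derivative E1 y) (at y) \<and> (E1 has_real_derivative E2 y) (at y)
     \<and> (E2 has_real_derivative E3 y) (at y)"
proof -
  obtain r a where r: "r > 0" and a: "\<And>x. \<bar>x - d\<bar> < r \<Longrightarrow> (\<lambda>m. (x - d) ^ m *\<^sub>R a m) sums E x"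
    using assms unfolding real_analytic_at_def by blast
  define S where "S c y = (\<Sum>n. c n * y ^ n)" for c :: "nat \<Rightarrow> real" and y
  have sm0: "\<And>y. \<bar>y\<bar> < r \<Longrightarrow> summable (\<lambda>n. a n * y ^ n)"
  proof -
    fix y :: real assume "\<bar>y\<bar> < r"
    then have "\<bar>(y + d) - d\<bar> < r" by simp
    from a[OF this] show "summable (\<lambda>n. a n * y ^ n)" by (simp add: sums_iff mult.commute)
  qed
  have Eeq: "\<And>x. \<bar>x - d\<bar> < r \<Longrightarrow> E x = S a (x - d)"
  proof -
    fix x assume "\<bar>x - d\<bar> < r"
    from a[OF this] have "(\<lambda>m. a m * (x - d) ^ m) sums E x" by (simp add: mult.commute)
    then show "E x = S a (x - d)" unfolding S_def by (simp add: sums_iff)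
  qed
  have sm1: "\<And>y. \<bar>y\<bar> < r \<Longrightarrow> summable (\<lambda>n. diffs a n * y ^ n)" using ps_deriv(2)[OF sm0] by blast
  have sm2: "\<And>y. \<bar>y\<bar> < r \<Longrightarrow> summable (\<lambda>n. diffs (diffs a) n * y ^ n)" using ps_deriv(2)[OF sm1] by blast
  have D: "\<And>c x. (\<And>y. \<bar>y\<bar> < r \<Longrightarrow> summable (\<lambda>n. c n * y ^ n)) \<Longrightarrow> \<bar>x - d\<bar> < r \<Longrightarrow>
      ((\<lambda>x. S c (x - d)) has_real_derivative S (diffs c) (x - d)) (at x)"
  proof -
    fix c x assume smc: "\<And>y. \<bar>y\<bar> < r \<Longrightarrow> summable (\<lambda>n. c n * y ^ n)" and x: "\<bar>x - d\<bar> < r"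
    have 1: "(S c has_real_derivative S (diffs c) (x - d)) (at (x - d))"
      unfolding S_def using ps_deriv(1)[OF smc x] .
    have 2: "((\<lambda>x. x - d) has_real_derivative 1) (at x)"
      by (auto intro!: derivative_eq_intros)
    show "((\<lambda>x. S c (x - d)) has_real_derivative S (diffs c) (x - d)) (at x)"
      using DERIV_chain2[OF 1 2] by simp
  qed
  show ?thesis
  proof (intro exI[of _ r] conjI r exI allI impI)
    fix y assume y: "\<bar>y - d\<bar> < r"
    have o: "open {x. \<bar>x - d\<bar> < r}" "y \<in> {x. \<bar>x - d\<bar> < r}"
      using y by (auto intro!: open_Collect_less continuous_intros)
    show "(E has_real_derivative S (diffs a) (y - d)) (at y)"
      using has_field_derivative_transform_within_open[OF D[OF sm0 y] o] Eeq by auto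
    show "((\<lambda>x. S (diffs a) (x - d)) has_real_derivative S (diffs (diffs a)) (y - d)) (at y)"
      using D[OF sm1 y] .
    show "((\<lambda>x. S (diffs (diffs a)) (x - d)) has_real_derivative S (diffs (diffs (diffs a))) (y - d)) (at y)"
      using D[OF sm2 y] .
  qed
qed



definition pv :: "(real \<Rightarrow> 'v::real_normed_vector) \<Rightarrow> bool" where
  "pv g \<longleftrightarrow> (\<exists>N c. g = (\<lambda>t. \<Sum>k<N. t ^ k *\<^sub>R c k))"

lemma pv_add: assumes "pv f" "pv g" shows "pv (\<lambda>t. f t + g t)"
proof -
  obtain N1 c1 where 1: "f = (\<lambda>t. \<Sum>k<N1. t ^ k *\<^sub>R c1 k)" using assms(1) pv_def by blast
  obtain N2 c2 where 2: "g = (\<lambda>t. \<Sum>k<N2. t ^ k *\<^sub>R c2 k)" using assms(2) pv_def by blast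
  define N where "N = max N1 N2"
  define c where "c k = (if k < N1 then c1 k else 0) + (if k < N2 then c2 k else 0)" for k
  have e1: "(\<Sum>k<N1. t ^ k *\<^sub>R c1 k) = (\<Sum>k<N. t ^ k *\<^sub>R (if k < N1 then c1 k else 0))" for t
    by (rule sum.mono_neutral_cong_left) (auto simp: N_def)
  have e2: "(\<Sum>k<N2. t ^ k *\<^sub>R c2 k) = (\<Sum>k<N. t ^ k *\<^sub>R (if k < N2 then c2 k else 0))" for t
    by (rule sum.mono_neutral_cong_left) (auto simp: N_def)
  have "(\<lambda>t. f t + g t) = (\<lambda>t. \<Sum>k<N. t ^ k *\<^sub>R c k)"
    unfolding 1 2 e1 e2 c_def by (simp add: sum.distrib scaleR_add_right)
  then show ?thesis unfolding pv_def by blast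
qed

lemma pv_scale: assumes "pv f" shows "pv (\<lambda>t. s *\<^sub>R f t)"
proof -
  obtain N c where 1: "f = (\<lambda>t. \<Sum>k<N. t ^ k *\<^sub>R c k)" using assms pv_def by blast
  have "(\<lambda>t. s *\<^sub>R f t) = (\<lambda>t. \<Sum>k<N. t ^ k *\<^sub>R (s *\<^sub>R c k))"
    unfolding 1 by (simp add: scaleR_sum_right mult.commute)
  then show ?thesis unfolding pv_def by (intro exI[of _ N] exI[of _ "\<lambda>k. s *\<^sub>R c k"])
qed

lemma pv_mulv: fixes f :: "real \<Rightarrow> real" assumes "pv f" shows "pv (\<lambda>t. f t *\<^sub>R u)"
proof -
  obtain N c where 1: "f = (\<lambda>t. \<Sum>k<N. t ^ k *\<^sub>R c k)" using assms pv_def by blast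
  have "(\<lambda>t. f t *\<^sub>R u) = (\<lambda>t. \<Sum>k<N. t ^ k *\<^sub>R (c k *\<^sub>R u))"
    unfolding 1 by (simp add: scaleR_sum_left)
  then show ?thesis unfolding pv_def by (intro exI[of _ N] exI[of _ "\<lambda>k. c k *\<^sub>R u"])
qed

lemma pv_zero: "pv (\<lambda>t. 0)"
  unfolding pv_def by (rule exI[of _ 0]) auto

lemma pv_id: "pv (\<lambda>t::real. t)"
  unfolding pv_def by (rule exI[of _ 2], rule exI[of _ "\<lambda>k. if k = 1 then 1 else 0"])
     (auto simp: numeral_2_eq_2)

lemma pv_sq: "pv (\<lambda>t::real. t\<^sup>2)"
  unfolding pv_def by (rule exI[of _ 3], rule exI[of _ "\<lambda>k. if k = 2 then 1 else 0"])
     (auto simp: numeral_3_eq_3 numeral_2_eq_2)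

lemma pv_deriv: assumes "pv g"
  shows "\<exists>g'. pv g' \<and> (\<forall>t. (g has_vector_derivative g' t) (at t))"
proof -
  obtain N c where 1: "g = (\<lambda>t. \<Sum>k<N. t ^ k *\<^sub>R c k)" using assms pv_def by blast
  have d: "(g has_vector_derivative (\<Sum>k<N. (of_nat k * t ^ (k - 1)) *\<^sub>R c k)) (at t)" for t
    unfolding 1
    by (rule has_vector_derivative_sum) (auto intro!: derivative_eq_intros has_vector_derivative_scaleR[where g="\<lambda>_. c _" and g'=0, simplified])
  have "pv (\<lambda>t. \<Sum>k<N. (of_nat k * t ^ (k - 1)) *\<^sub>R c k)"
  proof (cases N)
    case 0 then show ?thesis using pv_zero by simp
  next
    case (Suc M)
    have "(\<lambda>t. \<Sum>k<N. (of_nat k * t ^ (k - 1)) *\<^sub>R c k) = (\<lambda>t. \<Sum>k<M. t ^ k *\<^sub>R (of_nat (Suc k) *\<^sub>R c (Suc k)))"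
      unfolding Suc sum.lessThan_Suc_shift by (simp add: mult.commute)
    then show ?thesis unfolding pv_def by (intro exI[of _ M] exI[of _ "\<lambda>k. of_nat (Suc k) *\<^sub>R c (Suc k)"])
  qed
  then show ?thesis using d by blast
qed



lemma comp_fst_deriv:
  assumes "(A has_vector_derivative a) (at (fst x))"
  shows "((\<lambda>x. A (fst x)) has_derivative (\<lambda>h. fst h *\<^sub>R a)) (at x)"
  using has_derivative_compose[OF has_derivative_fst[OF has_derivative_ident] assms[unfolded has_vector_derivative_def]]
  by simp

lemma Ck_class:
  fixes A B :: "real \<Rightarrow> real" and C :: "real \<Rightarrow> 'v::euclidean_space"
  assumes "pv A" "pv B" "pv C"
  shows "Ck m UNIV (\<lambda>x::real \<times> ('v \<times> 'v). A (fst x) *\<^sub>R fst (snd x) + B (fst x) *\<^sub>R snd (snd x) + C (fst x))"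
  using assms
proof (induction m arbitrary: A B C)
  case (0 A B C)
  obtain A' where A': "pv A'" "\<And>t. (A has_vector_derivative A' t) (at t)" using pv_deriv[OF 0(1)] by blast
  obtain B' where B': "pv B'" "\<And>t. (B has_vector_derivative B' t) (at t)" using pv_deriv[OF 0(2)] by blast
  obtain C' where C': "pv C'" "\<And>t. (C has_vector_derivative C' t) (at t)" using pv_deriv[OF 0(3)] by blast
  have "continuous (at x) (\<lambda>x::real \<times> ('v \<times> 'v). A (fst x) *\<^sub>R fst (snd x) + B (fst x) *\<^sub>R snd (snd x) + C (fst x))" for x
    using A'(2) B'(2) C'(2)
    by (intro continuous_intros isCont_o2[OF continuous_fst[OF continuous_ident]]
        differentiable_imp_continuous_within vector_derivative_works[THEN iffD1] differentiableI_vector) 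
  then show ?case by (simp add: continuous_on_eq_continuous_at)
next
  case (Suc m A B C)
  obtain A' where A': "pv A'" "\<And>t. (A has_vector_derivative A' t) (at t)" using pv_deriv[OF Suc.prems(1)] by blast
  obtain B' where B': "pv B'" "\<And>t. (B has_vector_derivative B' t) (at t)" using pv_deriv[OF Suc.prems(2)] by blast
  obtain C' where C': "pv C'" "\<And>t. (C has_vector_derivative C' t) (at t)" using pv_deriv[OF Suc.prems(3)] by blast
  let ?f = "\<lambda>x::real \<times> ('v \<times> 'v). A (fst x) *\<^sub>R fst (snd x) + B (fst x) *\<^sub>R snd (snd x) + C (fst x)"
  have sf: "((\<lambda>x::real \<times> ('v \<times> 'v). fst (snd x)) has_derivative (\<lambda>h. fst (snd h))) (at x)" for x
    by (intro has_derivative_fst has_derivative_snd has_derivative_ident)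
  have ss: "((\<lambda>x::real \<times> ('v \<times> 'v). snd (snd x)) has_derivative (\<lambda>h. snd (snd h))) (at x)" for x
    by (intro has_derivative_snd has_derivative_ident)
  have D: "(?f has_derivative (\<lambda>h. (A (fst x) *\<^sub>R fst (snd h) + (fst h *\<^sub>R A' (fst x)) *\<^sub>R fst (snd x))
      + (B (fst x) *\<^sub>R snd (snd h) + (fst h *\<^sub>R B' (fst x)) *\<^sub>R snd (snd x)) + fst h *\<^sub>R C' (fst x))) (at x)" for x
    by (intro has_derivative_add has_derivative_scaleR comp_fst_deriv A'(2) B'(2) C'(2) sf ss)
  show ?case
  proof (simp only: Ck.simps, intro conjI ballI allI)
    fix x show "?f differentiable at x" using D[of x] unfolding differentiable_def by blast
  next
    fix v :: "real \<times> ('v \<times> 'v)"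
    have eq: "(\<lambda>x. frechet_derivative ?f (at x) v) =
      (\<lambda>x. (fst v * A' (fst x)) *\<^sub>R fst (snd x) + (fst v * B' (fst x)) *\<^sub>R snd (snd x)
           + (A (fst x) *\<^sub>R fst (snd v) + B (fst x) *\<^sub>R snd (snd v) + fst v *\<^sub>R C' (fst x)))"
    proof
      fix x
      show "frechet_derivative ?f (at x) v = (fst v * A' (fst x)) *\<^sub>R fst (snd x) + (fst v * B' (fst x)) *\<^sub>R snd (snd x)
           + (A (fst x) *\<^sub>R fst (snd v) + B (fst x) *\<^sub>R snd (snd v) + fst v *\<^sub>R C' (fst x))"
        unfolding frechet_derivative_at[OF D[of x], symmetric] by (simp add: algebra_simps)
    qed
    have "pv (\<lambda>t. fst v * A' t)" "pv (\<lambda>t. fst v * B' t)"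
      using pv_scale[OF A'(1), of "fst v"] pv_scale[OF B'(1), of "fst v"] by auto
    moreover have "pv (\<lambda>t. A t *\<^sub>R fst (snd v) + B t *\<^sub>R snd (snd v) + fst v *\<^sub>R C' t)"
      by (intro pv_add pv_mulv pv_scale Suc.prems A' B' C')
    ultimately show "Ck m UNIV (\<lambda>x. frechet_derivative ?f (at x) v)"
      unfolding eq by (rule Suc.IH)
  qed
qed



lemma subspace_pinned: "subspace (pinned_space l :: (real^'d::{finite,linorder}^'n::{finite,linorder}) set)"
  unfolding subspace_def pinned_space_def pinned_pos_def by auto

lemma subspace_K: "subspace (Kspace l Eg p :: (real^'d::{finite,linorder}^'n::{finite,linorder}) set)"
proof -
  have e1: "(x + y) $ v - (x + y) $ w = (x $ v - x $ w) + (y $ v - y $ w)" for x y :: "('a::real_vector)^'m" and v w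
    by simp
  have e2: "(c *\<^sub>R x) $ v - (c *\<^sub>R x) $ w = c *\<^sub>R (x $ v - x $ w)" for x :: "('a::real_vector)^'m" and c v w
    by (simp add: scaleR_diff_right)
  have V: "subspace (pinned_space l :: (real^'d::{finite,linorder}^'n::{finite,linorder}) set)" by (rule subspace_pinned)
  show ?thesis unfolding subspace_def
  proof (intro conjI ballI allI)
    show "0 \<in> Kspace l Eg p" using subspace_0[OF V] unfolding Kspace_def by auto
  next
    fix x y assume x: "x \<in> Kspace l Eg p" and y: "y \<in> Kspace l Eg p"
    have "x + y \<in> pinned_space l" using x y V unfolding Kspace_def by (auto intro: subspace_add)
    moreover have "(p $ v - p $ w) \<bullet> ((x + y) $ v - (x + y) $ w) = 0" if "(v, w) \<in> Eg" for v w
    proof -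
      have "(p $ v - p $ w) \<bullet> (x $ v - x $ w) = 0" "(p $ v - p $ w) \<bullet> (y $ v - y $ w) = 0"
        using x y that unfolding Kspace_def by auto
      then show ?thesis unfolding e1 inner_add_right by simp
    qed
    ultimately show "x + y \<in> Kspace l Eg p" unfolding Kspace_def by auto
  next
    fix c x assume x: "x \<in> Kspace l Eg p"
    have "c *\<^sub>R x \<in> pinned_space l" using x V unfolding Kspace_def by (auto intro: subspace_scale)
    moreover have "(p $ v - p $ w) \<bullet> ((c *\<^sub>R x) $ v - (c *\<^sub>R x) $ w) = 0" if "(v, w) \<in> Eg" for v w
    proof -
      have "(p $ v - p $ w) \<bullet> (x $ v - x $ w) = 0"
        using x that unfolding Kspace_def by auto
      then show ?thesis unfolding e2 inner_scaleR_right by simp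
    qed
    ultimately show "c *\<^sub>R x \<in> Kspace l Eg p" unfolding Kspace_def by auto
  qed
qed

lemma K_sub: "Kspace l Eg p \<subseteq> pinned_space l"
  unfolding Kspace_def by auto

lemma sep_bound:
  fixes K Kb :: "'v::euclidean_space set"
  assumes "subspace K" "subspace Kb" "K \<inter> Kb = {0}"
  shows "\<exists>C>0. \<forall>a\<in>K. \<forall>b\<in>Kb. norm a + norm b \<le> C * norm (a + b)"
proof -
  define T where "T = {z. fst z \<in> K \<and> snd z \<in> Kb \<and> norm (fst z) + norm (snd z) = 1}"
  have scaled: "(a /\<^sub>R (norm a + norm b), b /\<^sub>R (norm a + norm b)) \<in> T"
    if "a \<in> K" "b \<in> Kb" "norm a + norm b > 0" for a b
  proof -
    define s where "s = norm a + norm b"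
    have "norm (a /\<^sub>R s) + norm (b /\<^sub>R s) = norm a / s + norm b / s"
      using that(3) by (simp add: s_def divide_inverse_commute)
    also have "\<dots> = 1" using that(3) unfolding add_divide_distrib[symmetric] s_def by simp
    finally have "norm (a /\<^sub>R (norm a + norm b)) + norm (b /\<^sub>R (norm a + norm b)) = 1" unfolding s_def .
    then show ?thesis using that assms(1,2) unfolding T_def by (auto simp: subspace_scale)
  qed
  show ?thesis
  proof (cases "T = {}")
    case True
    show ?thesis
    proof (intro exI[of _ 1] conjI ballI)
      fix a b assume "a \<in> K" "b \<in> Kb"
      then have "\<not> norm a + norm b > 0" using scaled True by blast
      then show "norm a + norm b \<le> 1 * norm (a + b)" using norm_ge_zero[of "a+b"] by linarith
    qed simp
  next
    case False
    have "T = (K \<times> Kb) \<inter> {z. norm (fst z) + norm (snd z) = 1}" unfolding T_def by auto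
    moreover have "closed ((K \<times> Kb) \<inter> {z. norm (fst z) + norm (snd z) = 1})"
      using assms by (intro closed_Int closed_Times closed_subspace closed_Collect_eq continuous_intros)
    moreover have "bounded T"
      unfolding bounded_iff T_def
      by (intro exI[of _ 1]) (metis (mono_tags, lifting) mem_Collect_eq norm_Pair_le prod.collapse)
    ultimately have cT: "compact T" by (simp add: compact_eq_bounded_closed)
    obtain z where z: "z \<in> T" and zmin: "\<And>y. y \<in> T \<Longrightarrow> norm (fst z + snd z) \<le> norm (fst y + snd y)"
    proof -
      have "continuous_on T (\<lambda>z. norm (fst z + snd z))" by (intro continuous_intros)
      from continuous_attains_inf[OF cT False this] that show ?thesis by blast
    qed
    have pos: "norm (fst z + snd z) > 0"
    proof (rule ccontr)
      assume "\<not> ?thesis"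
      then have "fst z = - snd z" by (simp add: eq_neg_iff_add_eq_0)
      moreover have "fst z \<in> K" "snd z \<in> Kb" using z by (auto simp: T_def)
      ultimately have "fst z \<in> Kb" using assms(2) subspace_neg by fastforce
      then have "fst z \<in> K \<inter> Kb" using \<open>fst z \<in> K\<close> by blast
      then have "fst z = 0" using assms(3) by blast
      then have "snd z = 0" using \<open>fst z = - snd z\<close> by simp
      then show False using z \<open>fst z = 0\<close> by (simp add: T_def)
    qed
    define \<mu> where "\<mu> = norm (fst z + snd z)"
    show ?thesis
    proof (intro exI[of _ "1/\<mu>"] conjI ballI)
      show "0 < 1/\<mu>" using pos by (simp add: \<mu>_def)
      fix a b assume ab: "a \<in> K" "b \<in> Kb"
      show "norm a + norm b \<le> 1 / \<mu> * norm (a + b)"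
      proof (cases "norm a + norm b > 0")
        case True
        define s where "s = norm a + norm b"
        have "\<mu> \<le> norm (a /\<^sub>R s + b /\<^sub>R s)" using zmin[OF scaled[OF ab True]] by (simp add: \<mu>_def s_def)
        also have "\<dots> = norm (a + b) / s" using True by (simp add: s_def scaleR_add_right[symmetric] divide_inverse_commute)
        finally have "\<mu> * s \<le> norm (a + b)" using True by (simp add: s_def field_simps)
        then show ?thesis using pos True by (simp add: \<mu>_def s_def field_simps)
      next
        case False
        then have "norm a + norm b \<le> 0" by simp
        moreover have "0 \<le> 1 / \<mu> * norm (a + b)" using pos by (simp add: \<mu>_def)
        ultimately show ?thesis by linarith
      qed
    qed
  qed
qed




lemma analytic_quad:
  fixes a b :: "'v::real_normed_vector"
  shows "real_analytic_at (\<lambda>s. s *\<^sub>R a + s\<^sup>2 *\<^sub>R b) t"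
  unfolding real_analytic_at_def
proof (intro exI[of _ 1] conjI allI impI exI)
  fix x :: real
  define c where "c m = (if m = 0 then t *\<^sub>R a + t\<^sup>2 *\<^sub>R b else if m = 1 then a + (2*t) *\<^sub>R b else if m = 2 then b else 0)" for m :: nat
  have "(\<lambda>m. (x - t) ^ m *\<^sub>R c m) sums (\<Sum>m\<in>{0,1,2}. (x - t) ^ m *\<^sub>R c m)"
    by (rule sums_finite) (auto simp: c_def)
  moreover have "(\<Sum>m\<in>{0,1,2}. (x - t) ^ m *\<^sub>R c m) = x *\<^sub>R a + x\<^sup>2 *\<^sub>R b"
    by (simp add: c_def algebra_simps power2_eq_square) (metis mult.commute mult_2_right scaleR_add_left mult.assoc)
  ultimately show "(\<lambda>m. (x - t) ^ m *\<^sub>R c m) sums (x *\<^sub>R a + x\<^sup>2 *\<^sub>R b)" by simp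
qed simp

lemma compact_S:
  fixes K Kb :: "'v::euclidean_space set"
  assumes "subspace K" "subspace Kb" "C > 0" "\<forall>a\<in>K. \<forall>b\<in>Kb. norm a + norm b \<le> C * norm (a + b)"
  shows "compact {(a, b). a \<in> K \<and> b \<in> Kb \<and> norm (a + b) = 1}"
proof -
  have e: "{(a, b). a \<in> K \<and> b \<in> Kb \<and> norm (a + b) = 1} = (K \<times> Kb) \<inter> {z. norm (fst z + snd z) = 1}" by auto
  have "closed ((K \<times> Kb) \<inter> {z. norm (fst z + snd z) = 1})"
    using assms by (intro closed_Int closed_Times closed_subspace closed_Collect_eq continuous_intros)
  moreover have "bounded {(a, b). a \<in> K \<and> b \<in> Kb \<and> norm (a + b) = 1}"
    unfolding bounded_iff
  proof (intro exI[of _ C] ballI)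
    fix z assume "z \<in> {(a, b). a \<in> K \<and> b \<in> Kb \<and> norm (a + b) = 1}"
    then obtain a b where z: "z = (a, b)" "a \<in> K" "b \<in> Kb" "norm (a + b) = 1" by auto
    have "norm z \<le> norm a + norm b" unfolding z by (rule norm_Pair_le)
    also have "\<dots> \<le> C" using assms(4) z by force
    finally show "norm z \<le> C" .
  qed
  ultimately show ?thesis unfolding e by (simp add: compact_eq_bounded_closed)
qed

lemma I3_lemma:
  fixes K Kb V :: "'v::euclidean_space set"
  assumes K: "subspace K" and Kb: "subspace Kb" and VKK: "V \<subseteq> {a + b | a b. a \<in> K \<and> b \<in> Kb}"
    and C: "C > 0" and bnd: "\<forall>a\<in>K. \<forall>b\<in>Kb. norm a + norm b \<le> C * norm (a + b)"
    and ne: "{(a, b). a \<in> K \<and> b \<in> Kb \<and> norm (a + b) = 1} \<noteq> {}"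
    and \<delta>: "0 < \<delta>"
  shows "\<exists>r>0. \<forall>x\<in>V. norm x < r \<longrightarrow> (\<exists>z0\<in>{(a, b). a \<in> K \<and> b \<in> Kb \<and> norm (a + b) = 1}.
            \<exists>t\<in>{0..\<delta>}. (\<lambda>t (a, b). t *\<^sub>R a + t\<^sup>2 *\<^sub>R b) t z0 = x)"
proof (intro exI[of _ "\<delta>\<^sup>2 / ((\<delta> + 1) * C)"] conjI ballI impI)
  show "0 < \<delta>\<^sup>2 / ((\<delta> + 1) * C)" using \<delta> C by simp
  fix x assume xV: "x \<in> V" and xr: "norm x < \<delta>\<^sup>2 / ((\<delta> + 1) * C)"
  show "\<exists>z0\<in>{(a, b). a \<in> K \<and> b \<in> Kb \<and> norm (a + b) = 1}.
            \<exists>t\<in>{0..\<delta>}. (\<lambda>t (a, b). t *\<^sub>R a + t\<^sup>2 *\<^sub>R b) t z0 = x"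
  proof (cases "x = 0")
    case True
    obtain z0 where "z0 \<in> {(a, b). a \<in> K \<and> b \<in> Kb \<and> norm (a + b) = 1}" using ne by blast
    then show ?thesis using True \<delta> by (intro bexI[of _ z0] bexI[of _ 0]) auto
  next
    case False
    obtain a b where ab: "x = a + b" "a \<in> K" "b \<in> Kb" using xV VKK by blast
    define h where "h t = norm (t *\<^sub>R a + b) - t\<^sup>2" for t
    have hc: "continuous_on A h" for A unfolding h_def by (intro continuous_intros)
    have "norm (\<delta> *\<^sub>R a + b) \<le> \<delta> * norm a + norm b"
      using norm_triangle_ineq[of "\<delta> *\<^sub>R a" b] \<delta> by simp
    also have "\<dots> \<le> (\<delta> + 1) * (norm a + norm b)" using \<delta> by (simp add: algebra_simps)
    also have "\<dots> \<le> (\<delta> + 1) * (C * norm x)" using bnd ab \<delta> by (intro mult_left_mono) auto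
    also have "\<dots> < (\<delta> + 1) * (C * (\<delta>\<^sup>2 / ((\<delta> + 1) * C)))"
      using xr \<delta> C by (intro mult_strict_left_mono) auto
    also have "\<dots> = ((\<delta> + 1) * C) * (\<delta>\<^sup>2 / ((\<delta> + 1) * C))" by (simp only: mult.assoc)
    also have "\<dots> = \<delta>\<^sup>2" proof -
      have "(\<delta> + 1) * C \<noteq> 0" using \<delta> C by simp
      then show ?thesis by (simp only: times_divide_eq_right) (rule nonzero_mult_div_cancel_left)
    qed
    finally have hd: "h \<delta> \<le> 0" unfolding h_def by simp
    obtain t0 where t0: "0 \<le> t0" "t0 \<le> \<delta>" "h t0 > 0" "b = 0 \<longrightarrow> t0 > 0"
    proof (cases "b = 0")
      case False
      then show ?thesis using that[of 0] \<delta> by (simp add: h_def)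
    next
      case True
      then have "a \<noteq> 0" using \<open>x \<noteq> 0\<close> ab by simp
      define t0 where "t0 = min (norm a) \<delta> / 2"
      have "0 < t0" "t0 < norm a" "t0 \<le> \<delta>" using \<open>a \<noteq> 0\<close> \<delta> zero_less_norm_iff[of a] unfolding t0_def by (auto simp: min_def)
      then have "h t0 = t0 * (norm a - t0)" using True by (simp add: h_def power2_eq_square algebra_simps)
      also have "\<dots> > 0" using \<open>0 < t0\<close> \<open>t0 < norm a\<close> by simp
      finally show ?thesis using that[of t0] \<open>0 < t0\<close> \<open>t0 \<le> \<delta>\<close> by simp
    qed
    obtain t where t: "t0 \<le> t" "t \<le> \<delta>" "h t = 0"
      using IVT2'[of h \<delta> 0 t0] hd t0 hc by auto
    have tpos: "t > 0"
    proof (cases "b = 0")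
      case True then show ?thesis using t t0 by simp
    next
      case False
      then have "h 0 > 0" by (simp add: h_def)
      then have "t \<noteq> 0" using t by auto
      then show ?thesis using t t0 by simp
    qed
    have n1: "norm (t *\<^sub>R a + b) = t\<^sup>2" using t by (simp add: h_def)
    have "a /\<^sub>R t + b /\<^sub>R t\<^sup>2 = (1 / t\<^sup>2) *\<^sub>R (t *\<^sub>R a + b)"
      using tpos by (simp add: scaleR_add_right power2_eq_square divide_inverse_commute inverse_mult_distrib)
    then have "norm (a /\<^sub>R t + b /\<^sub>R t\<^sup>2) = 1" using n1 tpos by simp
    moreover have "a /\<^sub>R t \<in> K" "b /\<^sub>R t\<^sup>2 \<in> Kb" using ab K Kb by (auto intro: subspace_scale)
    moreover have "t *\<^sub>R (a /\<^sub>R t) + t\<^sup>2 *\<^sub>R (b /\<^sub>R t\<^sup>2) = x" using tpos ab by simp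
    ultimately show ?thesis using tpos t
      by (intro bexI[of _ "(a /\<^sub>R t, b /\<^sub>R t\<^sup>2)"] bexI[of _ t]) auto
  qed
qed





theorem lemma7p3:
  fixes p :: "real^'d::{finite,linorder}^'n::{finite,linorder}"
    and l :: nat
    and Eg :: "('n::{finite,linorder} \<times> 'n::{finite,linorder}) set"
    and Ee :: "'n::{finite,linorder} \<times> 'n::{finite,linorder} \<Rightarrow> real \<Rightarrow> real"
    and Kbar :: "(real^'d::{finite,linorder}^'n::{finite,linorder}) set"
  assumes "graph_edges Eg"
    and "pinned l p"
    and "stiff_bar Eg Ee p"
    and "complement_in (pinned_space l) (Kspace l Eg p) Kbar"
    and "E_flex 1 2 l Eg Ee p"
  shows "\<exists>\<epsilon>. indicative (\<lambda>\<delta>. energy Eg Ee (p + \<delta>) - energy Eg Ee p) (pinned_space l) 2 \<epsilon>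
            {(a, b). a \<in> Kspace l Eg p \<and> b \<in> Kbar \<and> norm (a + b) = 1}
            (\<lambda>t (a, b). t *\<^sub>R a + t\<^sup>2 *\<^sub>R b)"
proof -
  have V: "subspace (pinned_space l :: (real^'d::{finite,linorder}^'n::{finite,linorder}) set)"
    by (rule subspace_pinned)
  have K: "subspace (Kspace l Eg p)" by (rule subspace_K)
  have KV: "Kspace l Eg p \<subseteq> pinned_space l" by (rule K_sub)
  have Kb: "subspace Kbar" and KbV: "Kbar \<subseteq> pinned_space l" and KKb: "Kspace l Eg p \<inter> Kbar = {0}"
    and VKK: "pinned_space l \<subseteq> {a + b | a b. a \<in> Kspace l Eg p \<and> b \<in> Kbar}"
    using assms(4) unfolding complement_in_def by auto
  obtain C0 where C0: "C0 > 0" and bnd: "\<forall>a\<in>Kspace l Eg p. \<forall>b\<in>Kbar. norm a + norm b \<le> C0 * norm (a + b)"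
    using sep_bound[OF K Kb KKb] by blast
  have ne: "{(a, b). a \<in> Kspace l Eg p \<and> b \<in> Kbar \<and> norm (a + b) = 1} \<noteq> {}"
  proof -
    obtain P :: "real \<Rightarrow> real^'d::{finite,linorder}^'n::{finite,linorder}" and r t :: real where Pt: "\<bar>t\<bar> < r" "P t \<noteq> p" and Pp: "\<forall>t. \<bar>t\<bar> < r \<longrightarrow> pinned_pos l (P t)"
      using assms(5) unfolding E_flex_def by blast
    have "pinned_pos l p" using assms(2) unfolding pinned_def by blast
    moreover have "pinned_pos l (P t)" using Pp Pt by blast
    ultimately have "P t - p \<in> pinned_space l" using V unfolding pinned_space_def
      by (intro subspace_diff) auto
    then obtain a b where ab: "P t - p = a + b" "a \<in> Kspace l Eg p" "b \<in> Kbar" using VKK by blast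
    define s where "s = norm (P t - p)"
    have s: "s > 0" using Pt unfolding s_def by simp
    have "a /\<^sub>R s + b /\<^sub>R s = (1/s) *\<^sub>R (P t - p)" unfolding ab by (simp add: scaleR_add_right divide_inverse_commute)
    then have "norm (a /\<^sub>R s + b /\<^sub>R s) = 1" using s by (simp add: s_def)
    moreover have "a /\<^sub>R s \<in> Kspace l Eg p" "b /\<^sub>R s \<in> Kbar" using ab K Kb by (auto intro: subspace_scale)
    ultimately show ?thesis by blast
  qed
  have edge: "\<exists>X :: real \<times> (real \<Rightarrow> real) \<times> (real \<Rightarrow> real) \<times> (real \<Rightarrow> real).
      0 < fst X \<and> fst X \<le> norm (p $ fst e - p $ snd e) \<and>
      (\<forall>y. \<bar>y - norm (p $ fst e - p $ snd e)\<bar> < fst X \<longrightarrow>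
         (Ee e has_real_derivative fst (snd X) y) (at y) \<and> (fst (snd X) has_real_derivative fst (snd (snd X)) y) (at y)
         \<and> (fst (snd (snd X)) has_real_derivative snd (snd (snd X)) y) (at y)) \<and>
      fst (snd X) (norm (p $ fst e - p $ snd e)) = 0" if "e \<in> Eg" for e
  proof -
    define d where "d = norm (p $ fst e - p $ snd e)"
    have st: "d \<noteq> 0" "real_analytic_at (Ee e) d"
      "\<exists>r>0. \<forall>x. 0 < \<bar>x - d\<bar> \<and> \<bar>x - d\<bar> < r \<longrightarrow> Ee e d < Ee e x"
    proof -
      obtain i j where e: "e = (i, j)" by (cases e)
      have "norm (p $ i - p $ j) \<noteq> 0 \<and>
     real_analytic_at (Ee (i,j)) (norm (p $ i - p $ j)) \<and>
     (\<exists>r>0. \<forall>x. 0 < \<bar>x - norm (p $ i - p $ j)\<bar> \<and> \<bar>x - norm (p $ i - p $ j)\<bar> < r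
          \<longrightarrow> Ee (i,j) (norm (p $ i - p $ j)) < Ee (i,j) x)"
        using assms(3) that unfolding stiff_bar_def e by fastforce
      then show "d \<noteq> 0" "real_analytic_at (Ee e) d"
      "\<exists>r>0. \<forall>x. 0 < \<bar>x - d\<bar> \<and> \<bar>x - d\<bar> < r \<longrightarrow> Ee e d < Ee e x"
        unfolding d_def e by auto
    qed
    obtain rm where rm: "rm > 0" "\<And>x. 0 < \<bar>x - d\<bar> \<Longrightarrow> \<bar>x - d\<bar> < rm \<Longrightarrow> Ee e d < Ee e x" using st(3) by blast
    obtain r E1 E2 E3 where r: "r > 0" and ders: "\<forall>y. \<bar>y - d\<bar> < r \<longrightarrow>
         (Ee e has_real_derivative E1 y) (at y) \<and> (E1 has_real_derivative E2 y) (at y)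
         \<and> (E2 has_real_derivative E3 y) (at y)"
      using analytic_derivs[OF st(2)] by blast
    have "E1 d = 0"
    proof (rule DERIV_local_min[of "Ee e" "E1 d" d "min r rm"])
      show "(Ee e has_real_derivative E1 d) (at d)" using ders r by auto
      show "0 < min r rm" using r rm by simp
      show "\<forall>y. \<bar>d - y\<bar> < min r rm \<longrightarrow> Ee e d \<le> Ee e y"
      proof (intro allI impI)
        fix y assume "\<bar>d - y\<bar> < min r rm"
        then show "Ee e d \<le> Ee e y" using rm(2)[of y] by (cases "y = d") (auto simp: abs_minus_commute)
      qed
    qed
    moreover have "0 < min r d" "min r d \<le> d" using r st(1) by (auto simp: d_def)
    ultimately show ?thesis using ders unfolding d_def[symmetric]
      by (intro exI[of _ "(min r d, E1, E2, E3)"]) auto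
  qed
  obtain F where F: "\<forall>e\<in>Eg. 0 < fst (F e) \<and> fst (F e) \<le> norm (p $ fst e - p $ snd e) \<and>
      (\<forall>y. \<bar>y - norm (p $ fst e - p $ snd e)\<bar> < fst (F e) \<longrightarrow>
         (Ee e has_real_derivative fst (snd (F e)) y) (at y) \<and> (fst (snd (F e)) has_real_derivative fst (snd (snd (F e))) y) (at y)
         \<and> (fst (snd (snd (F e))) has_real_derivative snd (snd (snd (F e))) y) (at y)) \<and>
      fst (snd (F e)) (norm (p $ fst e - p $ snd e)) = 0"
  proof -
    have "\<forall>e\<in>Eg. \<exists>X :: real \<times> (real \<Rightarrow> real) \<times> (real \<Rightarrow> real) \<times> (real \<Rightarrow> real).
      0 < fst X \<and> fst X \<le> norm (p $ fst e - p $ snd e) \<and>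
      (\<forall>y. \<bar>y - norm (p $ fst e - p $ snd e)\<bar> < fst X \<longrightarrow>
         (Ee e has_real_derivative fst (snd X) y) (at y) \<and> (fst (snd X) has_real_derivative fst (snd (snd X)) y) (at y)
         \<and> (fst (snd (snd X)) has_real_derivative snd (snd (snd X)) y) (at y)) \<and>
      fst (snd X) (norm (p $ fst e - p $ snd e)) = 0" using edge by blast
    from bchoice[OF this] show ?thesis using that by blast
  qed
  define R where "R = Min (insert 1 ((\<lambda>e. fst (F e)) ` Eg))"
  have finE: "finite Eg" by simp
  have Rpos: "R > 0" unfolding R_def using F finE by (subst Min_gr_iff) auto
  have Rle: "R \<le> fst (F e)" if "e \<in> Eg" for e unfolding R_def using finE that by (intro Min_le) auto
  define \<epsilon> where "\<epsilon> = min (1/4) (R / (24 * C0))"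
  have \<epsilon>: "\<epsilon> > 0" "\<epsilon> \<le> 1/4" "\<epsilon> \<le> R / (24 * C0)" using Rpos C0 by (auto simp: \<epsilon>_def)
  show ?thesis
  proof (intro exI[of _ \<epsilon>])
    show "indicative (\<lambda>\<delta>. energy Eg Ee (p + \<delta>) - energy Eg Ee p) (pinned_space l) 2 \<epsilon>
            {(a, b). a \<in> Kspace l Eg p \<and> b \<in> Kbar \<and> norm (a + b) = 1}
            (\<lambda>t (a, b). t *\<^sub>R a + t\<^sup>2 *\<^sub>R b)"
      unfolding indicative_def
    proof (intro conjI)
      show "0 < \<epsilon>" by (rule \<epsilon>(1))
      show "compact {(a, b). a \<in> Kspace l Eg p \<and> b \<in> Kbar \<and> norm (a + b) = 1}"
        by (rule compact_S[OF K Kb C0 bnd])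
      show "\<forall>\<delta>. 0 < \<delta> \<and> \<delta> \<le> \<epsilon> \<longrightarrow> (\<exists>r>0. \<forall>x\<in>pinned_space l. norm x < r \<longrightarrow>
          (\<exists>z0\<in>{(a, b). a \<in> Kspace l Eg p \<and> b \<in> Kbar \<and> norm (a + b) = 1}.
            \<exists>t\<in>{0..\<delta>}. (\<lambda>t (a, b). t *\<^sub>R a + t\<^sup>2 *\<^sub>R b) t z0 = x))"
        using I3_lemma[OF K Kb VKK C0 bnd ne] by blast
      show "\<exists>U. open U \<and> {0..\<epsilon>} \<times> {(a, b). a \<in> Kspace l Eg p \<and> b \<in> Kbar \<and> norm (a + b) = 1} \<subseteq> U \<and>
          Ck (2 * 2 + 1) U (\<lambda>(t, z0). (\<lambda>t (a, b). t *\<^sub>R a + t\<^sup>2 *\<^sub>R b) t z0)"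
      proof (intro exI[of _ UNIV] conjI)
        have ceq: "(\<lambda>(t, z0). (\<lambda>t (a, b). t *\<^sub>R a + t\<^sup>2 *\<^sub>R b) t z0) =
          (\<lambda>x::real \<times> ((real^'d::{finite,linorder}^'n::{finite,linorder}) \<times> (real^'d::{finite,linorder}^'n::{finite,linorder})). (\<lambda>t. t) (fst x) *\<^sub>R fst (snd x) + (\<lambda>t. t\<^sup>2) (fst x) *\<^sub>R snd (snd x) + (\<lambda>t. 0) (fst x))"
          by (auto simp: fun_eq_iff split: prod.splits)
        show "Ck (2 * 2 + 1) UNIV (\<lambda>(t, z0). (\<lambda>t (a, b). t *\<^sub>R a + t\<^sup>2 *\<^sub>R b) t z0)"
          by (rule back_subst[of "Ck (2*2+1) UNIV", OF Ck_class[OF pv_id pv_sq pv_zero]])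
             (auto simp: fun_eq_iff split: prod.splits)
      qed auto
      show "\<forall>z0\<in>{(a, b). a \<in> Kspace l Eg p \<and> b \<in> Kbar \<and> norm (a + b) = 1}.
         (\<forall>t\<in>{0..\<epsilon>}. real_analytic_at (\<lambda>s. (\<lambda>t (a, b). t *\<^sub>R a + t\<^sup>2 *\<^sub>R b) s z0) t \<and>
            (\<lambda>t (a, b). t *\<^sub>R a + t\<^sup>2 *\<^sub>R b) t z0 \<in> pinned_space l) \<and>
         (\<exists>t\<in>{0..\<epsilon>}. (\<lambda>t (a, b). t *\<^sub>R a + t\<^sup>2 *\<^sub>R b) t z0 \<noteq> (\<lambda>t (a, b). t *\<^sub>R a + t\<^sup>2 *\<^sub>R b) 0 z0) \<and>
         (\<lambda>t (a, b). t *\<^sub>R a + t\<^sup>2 *\<^sub>R b) 0 z0 = 0"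
      proof (intro ballI)
        fix z0 assume "z0 \<in> {(a, b). a \<in> Kspace l Eg p \<and> b \<in> Kbar \<and> norm (a + b) = 1}"
        then obtain a b where z0: "z0 = (a, b)" "a \<in> Kspace l Eg p" "b \<in> Kbar" "norm (a + b) = 1" by blast
        have aV: "a \<in> pinned_space l" "b \<in> pinned_space l" using z0 KV KbV by auto
        have nz: "\<epsilon> *\<^sub>R a + \<epsilon>\<^sup>2 *\<^sub>R b \<noteq> 0"
        proof
          assume h: "\<epsilon> *\<^sub>R a + \<epsilon>\<^sup>2 *\<^sub>R b = 0"
          have "\<epsilon> *\<^sub>R (a + \<epsilon> *\<^sub>R b) = 0" using h by (simp add: scaleR_add_right power2_eq_square)
          then have "a + \<epsilon> *\<^sub>R b = 0" using \<epsilon>(1) by simp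
          then have "a = - (\<epsilon> *\<^sub>R b)" by (simp add: add_eq_0_iff2)
          then have "a \<in> Kbar" using Kb z0 by (auto intro: subspace_neg subspace_scale)
          then have "a = 0" using KKb z0 by blast
          then have "b = 0" using h \<epsilon>(1) by simp
          then show False using z0 \<open>a = 0\<close> by simp
        qed
        show "(\<forall>t\<in>{0..\<epsilon>}. real_analytic_at (\<lambda>s. (\<lambda>t (a, b). t *\<^sub>R a + t\<^sup>2 *\<^sub>R b) s z0) t \<and>
            (\<lambda>t (a, b). t *\<^sub>R a + t\<^sup>2 *\<^sub>R b) t z0 \<in> pinned_space l) \<and>
         (\<exists>t\<in>{0..\<epsilon>}. (\<lambda>t (a, b). t *\<^sub>R a + t\<^sup>2 *\<^sub>R b) t z0 \<noteq> (\<lambda>t (a, b). t *\<^sub>R a + t\<^sup>2 *\<^sub>R b) 0 z0) \<and>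
         (\<lambda>t (a, b). t *\<^sub>R a + t\<^sup>2 *\<^sub>R b) 0 z0 = 0"
          unfolding z0(1) prod.case
        proof (intro conjI ballI bexI[of _ \<epsilon>])
          fix t show "real_analytic_at (\<lambda>s. s *\<^sub>R a + s\<^sup>2 *\<^sub>R b) t" by (rule analytic_quad)
          show "t *\<^sub>R a + t\<^sup>2 *\<^sub>R b \<in> pinned_space l"
            by (intro subspace_add[OF V] subspace_scale[OF V] aV)
        next
          show "\<epsilon> *\<^sub>R a + \<epsilon>\<^sup>2 *\<^sub>R b \<noteq> 0 *\<^sub>R a + 0\<^sup>2 *\<^sub>R b" using nz by simp
          show "\<epsilon> \<in> {0..\<epsilon>}" using \<epsilon>(1) by simp
          show "0 *\<^sub>R a + 0\<^sup>2 *\<^sub>R b = 0" by simp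
        qed
      qed
      show "\<forall>z0\<in>{(a, b). a \<in> Kspace l Eg p \<and> b \<in> Kbar \<and> norm (a + b) = 1}. \<forall>m<2 * 2.
         hvd m (\<lambda>t. energy Eg Ee (p + (\<lambda>t (a, b). t *\<^sub>R a + t\<^sup>2 *\<^sub>R b) t z0) - energy Eg Ee p) {0..\<epsilon>} 0 = 0"
      proof (intro ballI allI impI)
        fix z0 and m :: nat assume z0S: "z0 \<in> {(a, b). a \<in> Kspace l Eg p \<and> b \<in> Kbar \<and> norm (a + b) = 1}" and m: "m < 2 * 2"
        then obtain a b where z0: "z0 = (a, b)" "a \<in> Kspace l Eg p" "b \<in> Kbar" "norm (a + b) = 1" by blast
        have "norm a + norm b \<le> C0" using bnd z0 by force
        then have ab: "norm a \<le> C0" "norm b \<le> C0" using norm_ge_zero[of a] norm_ge_zero[of b] by linarith+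
        define I where "I = {t::real. \<bar>t\<bar> < 2 * \<epsilon>}"
        have I0: "0 \<in> I" using \<epsilon> by (simp add: I_def)
        have edgeD: "\<exists>D :: nat \<Rightarrow> real \<Rightarrow> real. D 0 = (\<lambda>t. Ee e (norm ((p $ fst e - p $ snd e) + t *\<^sub>R (a $ fst e - a $ snd e) + t\<^sup>2 *\<^sub>R (b $ fst e - b $ snd e)))) \<and>
           (\<forall>m<3. \<forall>t\<in>I. (D m has_real_derivative D (Suc m) t) (at t)) \<and>
           D 1 0 = 0 \<and> D 2 0 = 0 \<and> D 3 0 = 0" if e: "e \<in> Eg" for e
        proof (rule edge_flat[where Ea="fst (snd (F e))" and Eb="fst (snd (snd (F e)))" and Ec="snd (snd (snd (F e)))"
              and R="fst (F e)"])
          show "(p $ fst e - p $ snd e) \<bullet> (a $ fst e - a $ snd e) = 0"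
            using z0(2) e unfolding Kspace_def by (cases e) auto
          show "\<And>y. \<bar>y - norm (p $ fst e - p $ snd e)\<bar> < fst (F e) \<Longrightarrow>
             (Ee e has_real_derivative fst (snd (F e)) y) (at y) \<and>
             (fst (snd (F e)) has_real_derivative fst (snd (snd (F e))) y) (at y) \<and>
             (fst (snd (snd (F e))) has_real_derivative snd (snd (snd (F e))) y) (at y)"
            using F e by blast
          show "fst (snd (F e)) (norm (p $ fst e - p $ snd e)) = 0" using F e by blast
          show "fst (F e) \<le> norm (p $ fst e - p $ snd e)" using F e by blast
          show "0 \<in> I" by (rule I0)
          fix t assume tI: "t \<in> I"
          define u where "u = a $ fst e - a $ snd e"
          define v where "v = b $ fst e - b $ snd e"
          have nu: "norm u \<le> 2 * C0"
          proof -
            have "norm u \<le> norm (a $ fst e) + norm (a $ snd e)" unfolding u_def by (rule norm_triangle_ineq4)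
            also have "\<dots> \<le> norm a + norm a" by (intro add_mono Finite_Cartesian_Product.norm_nth_le)
            finally show ?thesis using ab by simp
          qed
          have nv: "norm v \<le> 2 * C0"
          proof -
            have "norm v \<le> norm (b $ fst e) + norm (b $ snd e)" unfolding v_def by (rule norm_triangle_ineq4)
            also have "\<dots> \<le> norm b + norm b" by (intro add_mono Finite_Cartesian_Product.norm_nth_le)
            finally show ?thesis using ab by simp
          qed
          have tb: "\<bar>t\<bar> < 2 * \<epsilon>" using tI by (simp add: I_def)
          have t2: "t\<^sup>2 \<le> \<bar>t\<bar> * (1/2)"
          proof -
            have "t\<^sup>2 = \<bar>t\<bar> * \<bar>t\<bar>" by (simp add: power2_eq_square abs_mult_self_eq)
            also have "\<dots> \<le> \<bar>t\<bar> * (1/2)" using tb \<epsilon>(2) by (intro mult_left_mono) auto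
            finally show ?thesis .
          qed
          have "norm (t *\<^sub>R u + t\<^sup>2 *\<^sub>R v) \<le> \<bar>t\<bar> * norm u + t\<^sup>2 * norm v"
            using norm_triangle_ineq[of "t *\<^sub>R u" "t\<^sup>2 *\<^sub>R v"] by simp
          also have "\<dots> \<le> \<bar>t\<bar> * (2 * C0) + (\<bar>t\<bar> * (1/2)) * (2 * C0)"
            using nu nv t2 by (intro add_mono mult_left_mono mult_mono) auto
          also have "\<dots> = 3 * C0 * \<bar>t\<bar>" by (simp add: algebra_simps)
          also have "\<dots> \<le> 3 * C0 * (2 * \<epsilon>)" using tb C0 by (intro mult_left_mono) auto
          also have "\<dots> \<le> 3 * C0 * (2 * (R / (24 * C0)))" using \<epsilon>(3) C0 by (intro mult_left_mono) auto
          also have "\<dots> = R / 4" using C0 by (simp add: field_simps)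
          also have "\<dots> < R" using Rpos by simp
          also have "\<dots> \<le> fst (F e)" using Rle[OF e] .
          finally show "norm (t *\<^sub>R (a $ fst e - a $ snd e) + t\<^sup>2 *\<^sub>R (b $ fst e - b $ snd e)) < fst (F e)"
            unfolding u_def v_def .
        qed
        obtain DD where DD: "\<forall>e\<in>Eg. DD e 0 = (\<lambda>t. Ee e (norm ((p $ fst e - p $ snd e) + t *\<^sub>R (a $ fst e - a $ snd e) + t\<^sup>2 *\<^sub>R (b $ fst e - b $ snd e)))) \<and>
           (\<forall>m<3. \<forall>t\<in>I. (DD e m has_real_derivative DD e (Suc m) t) (at t)) \<and>
           DD e 1 0 = 0 \<and> DD e 2 0 = 0 \<and> DD e 3 0 = 0"
        proof -
          have "\<forall>e\<in>Eg. \<exists>D :: nat \<Rightarrow> real \<Rightarrow> real. D 0 = (\<lambda>t. Ee e (norm ((p $ fst e - p $ snd e) + t *\<^sub>R (a $ fst e - a $ snd e) + t\<^sup>2 *\<^sub>R (b $ fst e - b $ snd e)))) \<and>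
           (\<forall>m<3. \<forall>t\<in>I. (D m has_real_derivative D (Suc m) t) (at t)) \<and>
           D 1 0 = 0 \<and> D 2 0 = 0 \<and> D 3 0 = 0" using edgeD by (rule ballI)
          from bchoice[OF this] obtain DD where "\<forall>e\<in>Eg. DD e 0 = (\<lambda>t. Ee e (norm ((p $ fst e - p $ snd e) + t *\<^sub>R (a $ fst e - a $ snd e) + t\<^sup>2 *\<^sub>R (b $ fst e - b $ snd e)))) \<and>
           (\<forall>m<3. \<forall>t\<in>I. (DD e m has_real_derivative DD e (Suc m) t) (at t)) \<and>
           DD e 1 0 = 0 \<and> DD e 2 0 = 0 \<and> DD e 3 0 = 0" by (elim exE)
          then show ?thesis by (rule that)
        qed
        define \<phi> where "\<phi> t = energy Eg Ee (p + (t *\<^sub>R a + t\<^sup>2 *\<^sub>R b)) - energy Eg Ee p" for t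
        define D where "D m t = (\<Sum>e\<in>Eg. DD e m t) - (if m = 0 then energy Eg Ee p else 0)" for m t
        have en: "energy Eg Ee (p + (t *\<^sub>R a + t\<^sup>2 *\<^sub>R b)) = (\<Sum>e\<in>Eg. DD e 0 t)" for t
          unfolding energy_def
        proof (rule sum.cong[OF refl])
          fix e assume e: "e \<in> Eg"
          obtain i j where ij: "e = (i, j)" by (cases e)
          have cq: "(p + (t *\<^sub>R a + t\<^sup>2 *\<^sub>R b)) $ i - (p + (t *\<^sub>R a + t\<^sup>2 *\<^sub>R b)) $ j
              = (p $ i - p $ j) + t *\<^sub>R (a $ i - a $ j) + t\<^sup>2 *\<^sub>R (b $ i - b $ j)"
            by (simp add: algebra_simps)
          have d: "DD e 0 t = Ee (i, j) (norm ((p $ i - p $ j) + t *\<^sub>R (a $ i - a $ j) + t\<^sup>2 *\<^sub>R (b $ i - b $ j)))"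
            using DD e unfolding ij by simp
          show "(case e of (i, j) \<Rightarrow> Ee (i, j) (norm ((p + (t *\<^sub>R a + t\<^sup>2 *\<^sub>R b)) $ i - (p + (t *\<^sub>R a + t\<^sup>2 *\<^sub>R b)) $ j)))
              = DD e 0 t" unfolding ij prod.case cq using d[unfolded ij] by (rule sym)
        qed
        have D0: "D 0 = \<phi>" unfolding D_def \<phi>_def en by (simp add: fun_eq_iff)
        have Dd: "(D k has_real_derivative D (Suc k) t) (at t)" if "k < 3" "t \<in> {0..\<epsilon>}" for k t
        proof -
          have tI: "t \<in> I" using that \<epsilon> by (auto simp: I_def)
          have "((\<lambda>t. \<Sum>e\<in>Eg. DD e k t) has_real_derivative (\<Sum>e\<in>Eg. DD e (Suc k) t)) (at t)"
            using DD tI that(1) by (intro DERIV_sum) auto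
          then have "((\<lambda>t. (\<Sum>e\<in>Eg. DD e k t) - (if k = 0 then energy Eg Ee p else 0)) has_real_derivative
              (\<Sum>e\<in>Eg. DD e (Suc k) t) - 0) (at t)"
            by (intro DERIV_diff DERIV_const)
          then show ?thesis unfolding D_def by simp
        qed
        have hv: "hvd k \<phi> {0..\<epsilon>} 0 = D k 0" if "k \<le> 3" for k
          using hvd_link[of \<epsilon> D \<phi> 3, OF \<epsilon>(1) D0 Dd that] \<epsilon>(1) by auto
        have feq: "(\<lambda>t. energy Eg Ee (p + (\<lambda>t (a, b). t *\<^sub>R a + t\<^sup>2 *\<^sub>R b) t z0) - energy Eg Ee p) = \<phi>"
          unfolding z0(1) \<phi>_def by simp
        have "m = 0 \<or> m = 1 \<or> m = 2 \<or> m = 3" using m by auto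
        then have "D m 0 = 0"
        proof (elim disjE)
          assume "m = 0" then show ?thesis using D0 by (simp add: \<phi>_def)
        qed (use DD in \<open>simp_all add: D_def\<close>)
        then show "hvd m (\<lambda>t. energy Eg Ee (p + (\<lambda>t (a, b). t *\<^sub>R a + t\<^sup>2 *\<^sub>R b) t z0) - energy Eg Ee p) {0..\<epsilon>} 0 = 0"
          unfolding feq using hv m by simp
      qed
    qed
  qed
qed


end
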